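(* Let $\mathcal{P}$ be a collection of cells. Let $a=(i,j)$, $b=(k,l)$ and $\alpha=(m,n)$ with $i<m<k$ and $n<j<l$, and suppose $[a,b]$ and $[\alpha,\beta]$ with $\beta=b$ are inner intervals of $\mathcal{P}$. Put $c=(i,l)$, $d=(k,j)$, $\gamma=(m,l)$, $\delta=(k,n)$, $h=(m,j)$, $r=(i,n)$. Let $<^{\mathsf{P}}$ be a $\mathsf{P}$-order on $V(\mathcal{P})$ and suppose that the leading monomials of $f_{a,b}$ and $f_{\alpha,\beta}$ with respect to $<^{\mathsf{P}}_{\mathrm{lex}}$ are not coprime. Then $S(f_{a,b},f_{\alpha,\beta})$ reduces to $0$ modulo $\mathcal{G}$ with respect to $<^{\mathsf{P}}_{\mathrm{lex}}$ if and only if one of the following holds: (1) $x_ax_\gamma x_\delta<^{\mathsf{P}}_{\mathrm{lex}}x_\alpha x_cx_d$, and ($h,\delta<^{\mathsf{P}}\alpha$ or $h,\delta<^{\mathsf{P}}d$); (2) $x_ax_\gamma x_\delta<^{\mathsf{P}}_{\mathrm{lex}}x_\alpha x_cx_d$, $[r,h]$ is an inner interval of $\mathcal{P}$, and ($r,\gamma<^{\mathsf{P}}\alpha$ or $r,\gamma<^{\mathsf{P}}c$); (3) $x_\alpha x_cx_d<^{\mathsf{P}}_{\mathrm{lex}}x_ax_\gamma x_\delta$, and ($h,c<^{\mathsf{P}}a$ or $h,c<^{\mathsf{P}}\gamma$); (4) $x_\alpha x_cx_d<^{\mathsf{P}}_{\mathrm{lex}}x_ax_\gamma x_\delta$, $[r,h]$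 is an inner interval of $\mathcal{P}$, and ($r,d<^{\mathsf{P}}a$ or $r,d<^{\mathsf{P}}\delta$).
   Context: For $a=(i,j), b=(k,l)\in\mathbb{Z}^2$ with $a\le b$ componentwise, the interval $[a,b]=\{(m,n)\in\mathbb{Z}^2: i\le m\le k,\ j\le n\le l\}$; it is proper if $i<k$ and $j<l$, in which case $a,b$ are its diagonal corners and $(i,l)$ (upper left), $(k,j)$ (lower right) its anti-diagonal corners. A cell is a proper interval $[v,v+(1,1)]$; its vertices are its four corners. A collection of cells $\mathcal{P}$ is a nonempty finite set of cells; $V(\mathcal{P})$ is the set of all vertices of its cells. A proper interval $[a,b]$ is an inner interval of $\mathcal{P}$ if every cell $[v,v+(1,1)]\subseteq[a,b]$ belongs to $\mathcal{P}$. Let $K$ be a field and $S=K[x_v: v\in V(\mathcal{P})]$. For an inner interval $[a,b]$ with upper left corner $c$ and lower right corner $d$, put $f_{a,b}=x_ax_b-x_cx_d$; $\mathcal{G}$ is the set of all such inner 2-minors of $\mathcal{P}$. A $\mathsf{P}$-order is a total order $<^{\mathsf{P}}$ on $V(\mathcal{P})$; $<^{\mathsf{P}}_{\mathrm{lex}}$ is the lexicographic monomial order on $S$ with $x_u<x_v\iff u<^{\mathsf{P}}v$. For vertices $u,v,w$, "$u,v<^{\mathsf{P}}w$" means $u<^{\mathsf{P}}w$ and $v<^{\mathsf{P}}w$. *)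

theory Defs
  imports Main "HOL-Library.Poly_Mapping"
begin

type_synonym vertex = "int \<times> int"
type_synonym monom = "vertex \<Rightarrow>\<^sub>0 nat"
type_synonym 'k mpoly = "monom \<Rightarrow>\<^sub>0 'k"

text \<open>A cell [v, v+(1,1)] is represented by its lower left corner v;
  a collection of cells is a finite nonempty set of such corners.\<close>
definition is_collection_of_cells :: "vertex set \<Rightarrow> bool" where
  "is_collection_of_cells P \<longleftrightarrow> finite P \<and> P \<noteq> {}"

definition cell_vertices :: "vertex \<Rightarrow> vertex set" where
  "cell_vertices v = {v, (fst v + 1, snd v), (fst v, snd v + 1), (fst v + 1, snd v + 1)}"

definition vertex_set :: "vertex set \<Rightarrow> vertex set" where
  "vertex_set P = (\<Union>v\<in>P. cell_vertices v)"

definition inner_interval :: "vertex set \<Rightarrow> vertex \<Rightarrow> vertex \<Rightarrow> bool" where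
  "inner_interval P a b \<longleftrightarrow> fst a < fst b \<and> snd a < snd b \<and>
     (\<forall>v. fst a \<le> fst v \<and> fst v < fst b \<and> snd a \<le> snd v \<and> snd v < snd b \<longrightarrow> v \<in> P)"

definition var :: "vertex \<Rightarrow> 'k::comm_ring_1 mpoly" where
  "var v = Poly_Mapping.single (Poly_Mapping.single v 1) 1"

definition minor :: "vertex \<Rightarrow> vertex \<Rightarrow> 'k::comm_ring_1 mpoly" where
  "minor a b = var a * var b - var (fst a, snd b) * var (fst b, snd a)"

definition inner_minors :: "vertex set \<Rightarrow> 'k::comm_ring_1 mpoly set" where
  "inner_minors P = {minor a b | a b. inner_interval P a b}"

definition P_order :: "vertex set \<Rightarrow> (vertex \<Rightarrow> vertex \<Rightarrow> bool) \<Rightarrow> bool" where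
  "P_order P lt \<longleftrightarrow>
     (\<forall>u\<in>vertex_set P. \<not> lt u u) \<and>
     (\<forall>u\<in>vertex_set P. \<forall>v\<in>vertex_set P. \<forall>w\<in>vertex_set P. lt u v \<longrightarrow> lt v w \<longrightarrow> lt u w) \<and>
     (\<forall>u\<in>vertex_set P. \<forall>v\<in>vertex_set P. u \<noteq> v \<longrightarrow> lt u v \<or> lt v u)"

definition lex_less :: "(vertex \<Rightarrow> vertex \<Rightarrow> bool) \<Rightarrow> monom \<Rightarrow> monom \<Rightarrow> bool" where
  "lex_less lt m1 m2 \<longleftrightarrow>
     (\<exists>v. Poly_Mapping.lookup m1 v < Poly_Mapping.lookup m2 v \<and> (\<forall>w. lt v w \<longrightarrow> Poly_Mapping.lookup m1 w = Poly_Mapping.lookup m2 w))"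

definition lex_le :: "(vertex \<Rightarrow> vertex \<Rightarrow> bool) \<Rightarrow> monom \<Rightarrow> monom \<Rightarrow> bool" where
  "lex_le lt m1 m2 \<longleftrightarrow> m1 = m2 \<or> lex_less lt m1 m2"

definition lead_mon :: "(vertex \<Rightarrow> vertex \<Rightarrow> bool) \<Rightarrow> 'k::zero mpoly \<Rightarrow> monom" where
  "lead_mon lt f = (THE m. m \<in> Poly_Mapping.keys f \<and> (\<forall>m'\<in>Poly_Mapping.keys f. m' \<noteq> m \<longrightarrow> lex_less lt m' m))"

definition lead_coef :: "(vertex \<Rightarrow> vertex \<Rightarrow> bool) \<Rightarrow> 'k::zero mpoly \<Rightarrow> 'k" where
  "lead_coef lt f = Poly_Mapping.lookup f (lead_mon lt f)"

definition mon_lcm :: "monom \<Rightarrow> monom \<Rightarrow> monom" where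
  "mon_lcm u v = u + (v - u)"

definition spoly :: "(vertex \<Rightarrow> vertex \<Rightarrow> bool) \<Rightarrow> 'k::field mpoly \<Rightarrow> 'k mpoly \<Rightarrow> 'k mpoly" where
  "spoly lt f g =
     (let u = lead_mon lt f; v = lead_mon lt g; w = mon_lcm u v in
       Poly_Mapping.single (w - u) (inverse (lead_coef lt f)) * f
       - Poly_Mapping.single (w - v) (inverse (lead_coef lt g)) * g)"

text \<open>f reduces to 0 modulo G (Herzog--Hibi): f has a standard expression
  f = sum q_i g_i with g_i in G, q_i in S = K[x_v : v in V], and
  in(q_i g_i) <= in(f) whenever q_i g_i is nonzero.\<close>
definition reduces_to_zero ::
  "(vertex \<Rightarrow> vertex \<Rightarrow> bool) \<Rightarrow> vertex set \<Rightarrow> 'k::field mpoly set \<Rightarrow> 'k mpoly \<Rightarrow> bool" where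
  "reduces_to_zero lt V G f \<longleftrightarrow>
     (\<exists>gs qs. length qs = length gs \<and> set gs \<subseteq> G \<and>
        (\<forall>q\<in>set qs. \<forall>m\<in>Poly_Mapping.keys q. Poly_Mapping.keys m \<subseteq> V) \<and>
        f = sum_list (map2 (*) qs gs) \<and>
        (\<forall>i<length gs. qs ! i * gs ! i \<noteq> 0 \<longrightarrow>
            lex_le lt (lead_mon lt (qs ! i * gs ! i)) (lead_mon lt f)))"

definition mon3 :: "vertex \<Rightarrow> vertex \<Rightarrow> vertex \<Rightarrow> monom" where
  "mon3 u v w = Poly_Mapping.single u 1 + Poly_Mapping.single v 1 + Poly_Mapping.single w 1"

end

theory Submission
  imports Defs
begin

lemma lookup_mult_single_add:
  fixes q :: "'k::comm_ring_1 mpoly"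
  shows "Poly_Mapping.lookup (q * Poly_Mapping.single e c) (t + e) = Poly_Mapping.lookup q t * c"
proof -
  have "Poly_Mapping.lookup (q * Poly_Mapping.single e c) (t + e)
     = (\<Sum>l. Poly_Mapping.lookup q l * (c when t = l))"
    unfolding lookup_mult lookup_single
  proof (rule Sum_any.cong)
    fix l
    have "(\<Sum>r. (c when e = r) when t + e = l + r) = (\<Sum>r. (c when t + e = l + r) when e = r)"
      by (simp add: when_commute)
    also have "\<dots> = (c when t + e = l + e)" by (rule Sum_any_when_equal')
    also have "\<dots> = (c when t = l)" by (rule when_cong) auto
    finally show "Poly_Mapping.lookup q l * (\<Sum>r. (c when e = r) when t + e = l + r) = Poly_Mapping.lookup q l * (c when t = l)" by simp
  qed
  also have "\<dots> = (\<Sum>l. (Poly_Mapping.lookup q l * c when l = t))"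
    by (rule Sum_any.cong) (auto simp: when_def)
  also have "\<dots> = Poly_Mapping.lookup q t * c" by simp
  finally show ?thesis .
qed

lemma keys_mult_single:
  fixes q :: "'k::comm_ring_1 mpoly"
  shows "Poly_Mapping.keys (q * Poly_Mapping.single e c) \<subseteq> {t + e | t. t \<in> Poly_Mapping.keys q}"
  using keys_mult[of q "Poly_Mapping.single e c"] by (auto split: if_splits)

abbreviation X :: "vertex \<Rightarrow> monom" where "X v \<equiv> Poly_Mapping.single v (1::nat)"

definition supp :: "vertex set \<Rightarrow> monom \<Rightarrow> bool" where
  "supp V m \<longleftrightarrow> Poly_Mapping.keys m \<subseteq> V"

locale pord =
  fixes V :: "vertex set" and lt :: "vertex \<Rightarrow> vertex \<Rightarrow> bool"
  assumes irr: "u \<in> V \<Longrightarrow> \<not> lt u u"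
    and trans: "u \<in> V \<Longrightarrow> v \<in> V \<Longrightarrow> w \<in> V \<Longrightarrow> lt u v \<Longrightarrow> lt v w \<Longrightarrow> lt u w"
    and total: "u \<in> V \<Longrightarrow> v \<in> V \<Longrightarrow> u \<noteq> v \<Longrightarrow> lt u v \<or> lt v u"
begin

lemma supp_lookup: "supp V m \<Longrightarrow> w \<notin> V \<Longrightarrow> Poly_Mapping.lookup m w = 0"
  unfolding supp_def by (meson in_keys_iff subsetD)

lemma supp_in: "supp V m \<Longrightarrow> Poly_Mapping.lookup m w \<noteq> 0 \<Longrightarrow> w \<in> V"
  using supp_lookup[of m w] by (cases "w \<in> V") auto

lemma lex_irr: "\<not> lex_less lt m m"
  unfolding lex_less_def by auto

lemma lex_trans:
  assumes s1: "supp V m1" and s2: "supp V m2" and s3: "supp V m3"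
    and l1: "lex_less lt m1 m2" and l2: "lex_less lt m2 m3"
  shows "lex_less lt m1 m3"
proof -
  obtain v1 where v1: "Poly_Mapping.lookup m1 v1 < Poly_Mapping.lookup m2 v1"
    "\<And>w. lt v1 w \<Longrightarrow> Poly_Mapping.lookup m1 w = Poly_Mapping.lookup m2 w"
    using l1 unfolding lex_less_def by blast
  obtain v2 where v2: "Poly_Mapping.lookup m2 v2 < Poly_Mapping.lookup m3 v2"
    "\<And>w. lt v2 w \<Longrightarrow> Poly_Mapping.lookup m2 w = Poly_Mapping.lookup m3 w"
    using l2 unfolding lex_less_def by blast
  have V1: "v1 \<in> V" using supp_in[OF s2, of v1] v1 by auto
  have V2: "v2 \<in> V" using supp_in[OF s3, of v2] v2 by auto
  consider "v1 = v2" | "lt v1 v2" | "lt v2 v1" using total[OF V1 V2] by blast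
  then show ?thesis
  proof cases
    case 1
    show ?thesis unfolding lex_less_def
    proof (intro exI conjI allI impI)
      show "Poly_Mapping.lookup m1 v1 < Poly_Mapping.lookup m3 v1" using v1(1) v2(1) 1 by simp
      fix w assume "lt v1 w"
      then show "Poly_Mapping.lookup m1 w = Poly_Mapping.lookup m3 w" using v1(2) v2(2) 1 by simp
    qed
  next
    case 2
    show ?thesis unfolding lex_less_def
    proof (intro exI conjI allI impI)
      show "Poly_Mapping.lookup m1 v2 < Poly_Mapping.lookup m3 v2" using v1(2)[OF 2] v2(1) by simp
      fix w assume w: "lt v2 w"
      show "Poly_Mapping.lookup m1 w = Poly_Mapping.lookup m3 w"
      proof (cases "w \<in> V")
        case True
        have "lt v1 w" using trans[OF V1 V2 True 2 w] by simp
        then show ?thesis using v1(2) v2(2)[OF w] by simp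
      next
        case False
        then show ?thesis using supp_lookup[OF s1] supp_lookup[OF s3] by simp
      qed
    qed
  next
    case 3
    show ?thesis unfolding lex_less_def
    proof (intro exI conjI allI impI)
      show "Poly_Mapping.lookup m1 v1 < Poly_Mapping.lookup m3 v1" using v2(2)[OF 3] v1(1) by simp
      fix w assume w: "lt v1 w"
      show "Poly_Mapping.lookup m1 w = Poly_Mapping.lookup m3 w"
      proof (cases "w \<in> V")
        case True
        have "lt v2 w" using trans[OF V2 V1 True 3 w] by simp
        then show ?thesis using v1(2)[OF w] v2(2) by simp
      next
        case False
        then show ?thesis using supp_lookup[OF s1] supp_lookup[OF s3] by simp
      qed
    qed
  qed
qed

lemma lex_asym:
  "supp V m1 \<Longrightarrow> supp V m2 \<Longrightarrow> lex_less lt m1 m2 \<Longrightarrow> \<not> lex_less lt m2 m1"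
  using lex_trans[of m1 m2 m1] lex_irr[of m1] by blast

lemma max_exists:
  assumes "finite D" "D \<noteq> {}" "D \<subseteq> V"
  shows "\<exists>v\<in>D. \<forall>w\<in>D. \<not> lt v w"
  using assms
proof (induction D rule: finite_ne_induct)
  case (singleton x)
  then show ?case using irr by auto
next
  case (insert x F)
  then obtain y where y: "y \<in> F" "\<forall>w\<in>F. \<not> lt y w" by auto
  show ?case
  proof (cases "lt y x")
    case True
    have "\<forall>w\<in>insert x F. \<not> lt x w"
    proof
      fix w assume w: "w \<in> insert x F"
      show "\<not> lt x w"
      proof
        assume xw: "lt x w"
        show False
        proof (cases "w = x")
          case True then show False using xw irr insert by auto
        next
          case False
          then have "w \<in> F" using w by auto
          moreover have "lt y w" using trans[of y x w] True xw insert y \<open>w \<in> F\<close> by auto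
          ultimately show False using y by auto
        qed
      qed
    qed
    then show ?thesis by auto
  next
    case False
    then show ?thesis using y by auto
  qed
qed

lemma lex_total:
  assumes s1: "supp V m1" and s2: "supp V m2" and ne: "m1 \<noteq> m2"
  shows "lex_less lt m1 m2 \<or> lex_less lt m2 m1"
proof -
  define D where "D = {v. Poly_Mapping.lookup m1 v \<noteq> Poly_Mapping.lookup m2 v}"
  have "D \<subseteq> Poly_Mapping.keys m1 \<union> Poly_Mapping.keys m2" unfolding D_def by (auto simp: in_keys_iff)
  then have fin: "finite D" by (rule finite_subset) auto
  have DV: "D \<subseteq> V" using \<open>D \<subseteq> _\<close> s1 s2 unfolding supp_def by auto
  have "D \<noteq> {}"
  proof
    assume "D = {}"
    then have "\<And>v. Poly_Mapping.lookup m1 v = Poly_Mapping.lookup m2 v" unfolding D_def by auto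
    then have "m1 = m2" by (rule poly_mapping_eqI)
    then show False using ne by simp
  qed
  then obtain v where v: "v \<in> D" "\<forall>w\<in>D. \<not> lt v w" using max_exists[OF fin _ DV] by blast
  have eq: "\<And>w. lt v w \<Longrightarrow> Poly_Mapping.lookup m1 w = Poly_Mapping.lookup m2 w"
  proof -
    fix w assume "lt v w"
    then have "w \<notin> D" using v(2) by auto
    then show "Poly_Mapping.lookup m1 w = Poly_Mapping.lookup m2 w" unfolding D_def by simp
  qed
  have "Poly_Mapping.lookup m1 v < Poly_Mapping.lookup m2 v \<or> Poly_Mapping.lookup m2 v < Poly_Mapping.lookup m1 v"
    using v unfolding D_def by auto
  then show ?thesis
  proof
    assume "Poly_Mapping.lookup m1 v < Poly_Mapping.lookup m2 v"
    then have "lex_less lt m1 m2" unfolding lex_less_def by (intro exI[of _ v] conjI allI impI) (simp_all add: eq)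
    then show ?thesis by simp
  next
    assume "Poly_Mapping.lookup m2 v < Poly_Mapping.lookup m1 v"
    then have "lex_less lt m2 m1" unfolding lex_less_def by (intro exI[of _ v] conjI allI impI) (simp_all add: eq)
    then show ?thesis by simp
  qed
qed

lemma lex_add: "lex_less lt (m1 + t) (m2 + t) \<longleftrightarrow> lex_less lt m1 m2"
  unfolding lex_less_def by (simp add: lookup_add)

lemma lex_add_left: "lex_less lt (t + m1) (t + m2) \<longleftrightarrow> lex_less lt m1 m2"
  unfolding lex_less_def by (simp add: lookup_add)

lemma supp_add: "supp V m1 \<Longrightarrow> supp V m2 \<Longrightarrow> supp V (m1 + m2)"
  unfolding supp_def using keys_add[of m1 m2] by auto

lemma supp_X: "v \<in> V \<Longrightarrow> supp V (X v)"
  unfolding supp_def by simp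

lemma max_set_exists:
  assumes "finite K" "K \<noteq> {}" "\<forall>m\<in>K. supp V m"
  shows "\<exists>m\<in>K. \<forall>m'\<in>K. m' \<noteq> m \<longrightarrow> lex_less lt m' m"
  using assms
proof (induction K rule: finite_ne_induct)
  case (singleton x)
  then show ?case by auto
next
  case (insert x F)
  then obtain y where y: "y \<in> F" "\<forall>m'\<in>F. m' \<noteq> y \<longrightarrow> lex_less lt m' y" by auto
  have sx: "supp V x" and sy: "supp V y" using insert y by auto
  have xy: "x \<noteq> y" using insert y by auto
  show ?case
  proof (cases "lex_less lt y x")
    case True
    have "\<forall>m'\<in>insert x F. m' \<noteq> x \<longrightarrow> lex_less lt m' x"
    proof (intro ballI impI)
      fix m' assume m': "m' \<in> insert x F" "m' \<noteq> x"
      then have "m' \<in> F" by auto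
      show "lex_less lt m' x"
      proof (cases "m' = y")
        case True then show ?thesis using \<open>lex_less lt y x\<close> by simp
      next
        case False
        then have "lex_less lt m' y" using y \<open>m' \<in> F\<close> by auto
        then show ?thesis using lex_trans[of m' y x] \<open>lex_less lt y x\<close> insert \<open>m' \<in> F\<close> sy sx by auto
      qed
    qed
    then show ?thesis by auto
  next
    case False
    then have "lex_less lt x y" using lex_total[OF sx sy xy] by auto
    then show ?thesis using y by auto
  qed
qed

lemma lead_mon_prop:
  fixes f :: "'k::zero mpoly"
  assumes "Poly_Mapping.keys f \<noteq> {}" "\<forall>m\<in>Poly_Mapping.keys f. supp V m"
  shows "lead_mon lt f \<in> Poly_Mapping.keys f \<and>
     (\<forall>m'\<in>Poly_Mapping.keys f. m' \<noteq> lead_mon lt f \<longrightarrow> lex_less lt m' (lead_mon lt f))"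
proof -
  obtain m where m: "m \<in> Poly_Mapping.keys f" "\<forall>m'\<in>Poly_Mapping.keys f. m' \<noteq> m \<longrightarrow> lex_less lt m' m"
    using max_set_exists[of "Poly_Mapping.keys f"] assms by auto
  have "lead_mon lt f = m"
    unfolding lead_mon_def
  proof (rule the_equality)
    show "m \<in> Poly_Mapping.keys f \<and> (\<forall>m'\<in>Poly_Mapping.keys f. m' \<noteq> m \<longrightarrow> lex_less lt m' m)" using m by blast
    fix m2 assume m2: "m2 \<in> Poly_Mapping.keys f \<and> (\<forall>m'\<in>Poly_Mapping.keys f. m' \<noteq> m2 \<longrightarrow> lex_less lt m' m2)"
    show "m2 = m"
    proof (rule ccontr)
      assume "m2 \<noteq> m"
      then have "lex_less lt m2 m" "lex_less lt m m2" using m m2 by auto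
      then show False using lex_asym[of m2 m] assms m m2 by blast
    qed
  qed
  then show ?thesis using m by simp
qed

end

context pord begin

lemma lex2:
  assumes V: "p \<in> V" "q \<in> V" "s \<in> V" "t \<in> V"
    and d: "p \<noteq> q" "p \<noteq> s" "p \<noteq> t" "q \<noteq> s" "q \<noteq> t" "s \<noteq> t"
  shows "lex_less lt (X s + X t) (X p + X q) \<longleftrightarrow> (lt s p \<and> lt t p) \<or> (lt s q \<and> lt t q)"
proof
  assume "lex_less lt (X s + X t) (X p + X q)"
  then obtain v where v: "Poly_Mapping.lookup (X s + X t) v < Poly_Mapping.lookup (X p + X q) v"
    "\<And>w. lt v w \<Longrightarrow> Poly_Mapping.lookup (X s + X t) w = Poly_Mapping.lookup (X p + X q) w"
    unfolding lex_less_def by blast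
  have vpq: "v = p \<or> v = q" using v(1) by (auto simp: lookup_add lookup_single when_def split: if_splits)
  have vV: "v \<in> V" using vpq V by auto
  have vs: "v \<noteq> s" "v \<noteq> t" using vpq d by auto
  have "\<not> lt v s" using v(2)[of s] d by (auto simp: lookup_add lookup_single when_def)
  then have "lt s v" using total[OF vV V(3) vs(1)] by auto
  moreover have "\<not> lt v t" using v(2)[of t] d by (auto simp: lookup_add lookup_single when_def)
  then have "lt t v" using total[OF vV V(4) vs(2)] by auto
  ultimately show "(lt s p \<and> lt t p) \<or> (lt s q \<and> lt t q)" using vpq by auto
next
  assume H: "(lt s p \<and> lt t p) \<or> (lt s q \<and> lt t q)"
  obtain v where v: "v = p \<or> v = q" "lt s v" "lt t v" "\<not> lt v p" "\<not> lt v q"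
  proof (cases "lt p q")
    case True
    have "lt s q \<and> lt t q" using H True trans V by blast
    moreover have "\<not> lt q p" using True trans[of p q p] irr[of p] V by blast
    ultimately show ?thesis using that[of q] irr[of q] V by blast
  next
    case False
    then have "lt q p" using total[of p q] V d by blast
    have "lt s p \<and> lt t p" using H \<open>lt q p\<close> trans V by blast
    moreover have "\<not> lt p q" using False .
    ultimately show ?thesis using that[of p] irr[of p] V by blast
  qed
  have vV: "v \<in> V" using v V by auto
  show "lex_less lt (X s + X t) (X p + X q)"
    unfolding lex_less_def
  proof (intro exI[of _ v] conjI allI impI)
    show "Poly_Mapping.lookup (X s + X t) v < Poly_Mapping.lookup (X p + X q) v"
      using v(1) d by (auto simp: lookup_add lookup_single when_def)
    fix w assume w: "lt v w"
    have "w \<noteq> p" "w \<noteq> q" using w v by auto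
    moreover have "w \<noteq> s" using w v trans[of v s v] irr[of v] vV V by blast
    moreover have "w \<noteq> t" using w v trans[of v t v] irr[of v] vV V by blast
    ultimately show "Poly_Mapping.lookup (X s + X t) w = Poly_Mapping.lookup (X p + X q) w"
      by (auto simp: lookup_add lookup_single when_def)
  qed
qed

lemma lead_two:
  fixes f :: "'k::zero mpoly"
  assumes "supp V m1" "supp V m2" "Poly_Mapping.keys f = {m1, m2}" "lex_less lt m2 m1"
  shows "lead_mon lt f = m1"
proof -
  have "lead_mon lt f \<in> {m1, m2} \<and> (\<forall>m'\<in>{m1,m2}. m' \<noteq> lead_mon lt f \<longrightarrow> lex_less lt m' (lead_mon lt f))"
    using lead_mon_prop[of f] assms by auto
  moreover have "m1 \<noteq> m2" using assms(4) lex_irr by auto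
  ultimately show ?thesis using lex_asym[OF assms(1,2)] assms(4) by auto
qed

lemma lead_le_two:
  fixes f :: "'k::zero mpoly"
  assumes "supp V m1" "supp V m2" "Poly_Mapping.keys f = {m1, m2}" "lex_le lt m1 M" "lex_le lt m2 M"
  shows "lex_le lt (lead_mon lt f) M"
proof -
  have "lead_mon lt f \<in> {m1, m2}"
    using lead_mon_prop[of f] assms by auto
  then show ?thesis using assms by auto
qed

lemma lex_le_trans:
  "supp V m1 \<Longrightarrow> supp V m2 \<Longrightarrow> supp V m3 \<Longrightarrow> lex_le lt m1 m2 \<Longrightarrow> lex_le lt m2 m3 \<Longrightarrow> lex_le lt m1 m3"
  unfolding lex_le_def using lex_trans by blast

lemma core_L:
  fixes q :: "'k::comm_ring_1 mpoly"
  assumes sq: "\<forall>t\<in>Poly_Mapping.keys q. supp V t" and sh: "supp V ehi" and sl: "supp V elo"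
    and hl: "lex_less lt elo ehi"
    and QM: "lex_le lt (lead_mon lt (q * (Poly_Mapping.single ehi 1 - Poly_Mapping.single elo 1))) M"
    and MK: "M \<in> Poly_Mapping.keys (q * (Poly_Mapping.single ehi 1 - Poly_Mapping.single elo 1))"
    and sM: "supp V M"
  shows "\<exists>t. M = t + ehi"
proof (rule ccontr)
  assume nM: "\<not> (\<exists>t. M = t + ehi)"
  define Q where "Q = q * (Poly_Mapping.single ehi 1 - Poly_Mapping.single elo 1)"
  have Qe: "Q = q * Poly_Mapping.single ehi 1 - q * Poly_Mapping.single elo 1"
    unfolding Q_def by (simp add: right_diff_distrib)
  have kQ: "Poly_Mapping.keys Q \<subseteq> {t + ehi | t. t \<in> Poly_Mapping.keys q} \<union> {t + elo | t. t \<in> Poly_Mapping.keys q}"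
  proof
    fix k assume "k \<in> Poly_Mapping.keys Q"
    then have "k \<in> Poly_Mapping.keys (q * Poly_Mapping.single ehi 1) \<or> k \<in> Poly_Mapping.keys (q * Poly_Mapping.single elo 1)"
      unfolding Qe by (auto simp: in_keys_iff lookup_minus)
    then show "k \<in> {t + ehi | t. t \<in> Poly_Mapping.keys q} \<union> {t + elo | t. t \<in> Poly_Mapping.keys q}"
      using keys_mult_single[of q ehi 1] keys_mult_single[of q elo 1] by blast
  qed
  have sQ: "\<forall>m\<in>Poly_Mapping.keys Q. supp V m"
    using kQ sq sh sl supp_add by blast
  have MK': "M \<in> Poly_Mapping.keys Q" using MK Q_def by simp
  have lp: "lead_mon lt Q \<in> Poly_Mapping.keys Q \<and> (\<forall>m'\<in>Poly_Mapping.keys Q. m' \<noteq> lead_mon lt Q \<longrightarrow> lex_less lt m' (lead_mon lt Q))"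
    using lead_mon_prop[of Q] MK' sQ by blast
  have allM: "lex_le lt m' M" if "m' \<in> Poly_Mapping.keys Q" for m'
  proof -
    have "lex_le lt m' (lead_mon lt Q)" using lp that unfolding lex_le_def by blast
    then show ?thesis using lex_le_trans[of m' "lead_mon lt Q" M] QM sQ that lp sM Q_def by blast
  qed
  have "q \<noteq> 0" using MK' Qe by auto
  then have "Poly_Mapping.keys q \<noteq> {}" by simp
  then obtain t0 where t0: "t0 \<in> Poly_Mapping.keys q" "\<forall>m'\<in>Poly_Mapping.keys q. m' \<noteq> t0 \<longrightarrow> lex_less lt m' t0"
    using max_set_exists[of "Poly_Mapping.keys q"] sq by auto
  have st0: "supp V t0" using t0 sq by auto
  have below: "lex_less lt (t + elo) (t0 + ehi)" if "t \<in> Poly_Mapping.keys q" for t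
  proof -
    have st: "supp V t" using that sq by auto
    have 1: "lex_less lt (t0 + elo) (t0 + ehi)" using hl lex_add_left by simp
    show ?thesis
    proof (cases "t = t0")
      case True then show ?thesis using 1 by simp
    next
      case False
      then have "lex_less lt (t + elo) (t0 + elo)" using t0 that lex_add by auto
      then show ?thesis using lex_trans[OF supp_add[OF st sl] supp_add[OF st0 sl] supp_add[OF st0 sh]] 1 by blast
    qed
  qed
  have "Poly_Mapping.lookup (q * Poly_Mapping.single elo 1) (t0 + ehi) = 0"
  proof (rule ccontr)
    assume "Poly_Mapping.lookup (q * Poly_Mapping.single elo 1) (t0 + ehi) \<noteq> 0"
    then have "t0 + ehi \<in> Poly_Mapping.keys (q * Poly_Mapping.single elo 1)" by (simp add: in_keys_iff)
    then obtain t where t: "t \<in> Poly_Mapping.keys q" "t0 + ehi = t + elo" using keys_mult_single[of q elo 1] by blast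
    then show False using below[OF t(1)] lex_irr by simp
  qed
  then have "Poly_Mapping.lookup Q (t0 + ehi) = Poly_Mapping.lookup q t0"
    unfolding Qe by (simp add: lookup_minus lookup_mult_single_add)
  then have "t0 + ehi \<in> Poly_Mapping.keys Q" using t0 by (simp add: in_keys_iff)
  then have A: "lex_le lt (t0 + ehi) M" using allM by blast
  from MK' kQ nM obtain t where t: "t \<in> Poly_Mapping.keys q" "M = t + elo" by blast
  then have "lex_less lt M (t0 + ehi)" using below by simp
  then show False using A lex_asym[OF sM supp_add[OF st0 sh]] unfolding lex_le_def by auto
qed

end

abbreviation Y :: "monom \<Rightarrow> 'k::comm_ring_1 mpoly" where "Y m \<equiv> Poly_Mapping.single m 1"

lemma mon3_alt: "mon3 u v w = X u + (X v + X w)"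
  unfolding mon3_def by (simp add: add.assoc)
lemma mon3_swap12: "mon3 u v w = mon3 v u w" unfolding mon3_def by (simp add: ac_simps)
lemma mon3_swap23: "mon3 u v w = mon3 u w v" unfolding mon3_def by (simp add: ac_simps)

lemma lookup_X: "Poly_Mapping.lookup (X u) v = (if u = v then 1 else 0)"
  by (simp add: lookup_single when_def)

lemma lookup_mon3: "Poly_Mapping.lookup (mon3 u v w) x =
   (if u = x then 1 else 0) + (if v = x then 1 else 0) + (if w = x then 1 else 0)"
  unfolding mon3_def by (simp add: lookup_add lookup_single when_def)

lemma mon3_neq: "u \<noteq> u' \<Longrightarrow> u \<noteq> v' \<Longrightarrow> u \<noteq> w' \<Longrightarrow> mon3 u v w \<noteq> mon3 u' v' w'"
proof
  assume "u \<noteq> u'" "u \<noteq> v'" "u \<noteq> w'" "mon3 u v w = mon3 u' v' w'"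
  then have "Poly_Mapping.lookup (mon3 u v w) u = Poly_Mapping.lookup (mon3 u' v' w') u" by simp
  then show False using \<open>u \<noteq> u'\<close> \<open>u \<noteq> v'\<close> \<open>u \<noteq> w'\<close> by (simp add: lookup_mon3)
qed

lemma keysY2: "m1 \<noteq> m2 \<Longrightarrow> Poly_Mapping.keys (Y m1 - Y m2 :: 'k::comm_ring_1 mpoly) = {m1, m2}"
  by (auto simp: in_keys_iff lookup_minus lookup_single when_def split: if_splits)

lemma keysY2_sub: "Poly_Mapping.keys (Y m1 - Y m2 :: 'k::comm_ring_1 mpoly) \<subseteq> {m1, m2}"
  by (auto simp: in_keys_iff lookup_minus lookup_single when_def split: if_splits)

lemma minor_Y: "(minor a b :: 'k::comm_ring_1 mpoly) = Y (X a + X b) - Y (X (fst a, snd b) + X (fst b, snd a))"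
  by (simp add: minor_def var_def mult_single)

lemma var_mult_Y: "(var u :: 'k::comm_ring_1 mpoly) * (Y m1 - Y m2) = Y (X u + m1) - Y (X u + m2)"
  by (simp add: var_def mult_single right_diff_distrib)

lemma nvar_mult_Y: "(- var u :: 'k::comm_ring_1 mpoly) * (Y m1 - Y m2) = Y (X u + m2) - Y (X u + m1)"
  by (simp add: var_def mult_single right_diff_distrib)

lemma keys_var: "Poly_Mapping.keys (var u :: 'k::comm_ring_1 mpoly) = {X u}"
  by (simp add: var_def)
lemma keys_nvar: "Poly_Mapping.keys (- var u :: 'k::comm_ring_1 mpoly) = {X u}"
  by (simp add: var_def single_uminus[symmetric])

definition VV :: "vertex set \<Rightarrow> vertex set" where "VV P = vertex_set P"

lemma inner_corners:
  assumes "inner_interval P (x1, y1) (x2, y2)"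
  shows "(x1, y1) \<in> vertex_set P" "(x2, y2) \<in> vertex_set P" "(x1, y2) \<in> vertex_set P" "(x2, y1) \<in> vertex_set P"
proof -
  have c1: "(x1, y1) \<in> P" using assms unfolding inner_interval_def by auto
  have c2: "(x2 - 1, y2 - 1) \<in> P" using assms unfolding inner_interval_def by auto
  have c3: "(x1, y2 - 1) \<in> P" using assms unfolding inner_interval_def by auto
  have c4: "(x2 - 1, y1) \<in> P" using assms unfolding inner_interval_def by auto
  show "(x1, y1) \<in> vertex_set P" using c1 unfolding vertex_set_def cell_vertices_def by blast
  show "(x2, y2) \<in> vertex_set P" using c2 unfolding vertex_set_def cell_vertices_def
    by (rule UN_I) simp
  show "(x1, y2) \<in> vertex_set P" using c3 unfolding vertex_set_def cell_vertices_def
    by (rule UN_I) simp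
  show "(x2, y1) \<in> vertex_set P" using c4 unfolding vertex_set_def cell_vertices_def
    by (rule UN_I) simp
qed

lemma inner_sub:
  assumes "inner_interval P (x1, y1) (x2, y2)" "x1 \<le> x1'" "x1' < x2'" "x2' \<le> x2" "y1 \<le> y1'" "y1' < y2'" "y2' \<le> y2"
  shows "inner_interval P (x1', y1') (x2', y2')"
  using assms unfolding inner_interval_def by auto

lemma inner_union_x:
  assumes "inner_interval P (x1, y1) (x2, y2)" "inner_interval P (x2, y1) (x3, y2)"
  shows "inner_interval P (x1, y1) (x3, y2)"
  using assms unfolding inner_interval_def
  by (metis fst_conv not_le order_less_trans snd_conv)

lemma inner_union_y:
  assumes "inner_interval P (x1, y1) (x2, y2)" "inner_interval P (x1, y2) (x2, y3)"
  shows "inner_interval P (x1, y1) (x2, y3)"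
  using assms unfolding inner_interval_def
  by (metis fst_conv not_le order_less_trans snd_conv)

lemma keys_uminus': "Poly_Mapping.keys (- q :: 'k::comm_ring_1 mpoly) = Poly_Mapping.keys q"
  by (auto simp: in_keys_iff)

lemma lookup_sum_list_zero:
  "(\<forall>x\<in>set xs. Poly_Mapping.lookup x M = (0::'k::comm_ring_1)) \<Longrightarrow> Poly_Mapping.lookup (sum_list xs) M = 0"
  by (induction xs) (auto simp: lookup_add)

context pord begin

lemma supp_mon3: "u \<in> V \<Longrightarrow> v \<in> V \<Longrightarrow> w \<in> V \<Longrightarrow> supp V (mon3 u v w)"
  unfolding mon3_alt by (intro supp_add supp_X)

lemma lex3:
  assumes V: "u \<in> V" "p \<in> V" "q \<in> V" "s \<in> V" "t \<in> V"
    and d: "p \<noteq> q" "p \<noteq> s" "p \<noteq> t" "q \<noteq> s" "q \<noteq> t" "s \<noteq> t"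
  shows "lex_less lt (mon3 u s t) (mon3 u p q) \<longleftrightarrow> (lt s p \<and> lt t p) \<or> (lt s q \<and> lt t q)"
  unfolding mon3_alt lex_add_left using lex2[OF V(2-5) d] .

lemma if_dir:
  fixes q1 q2 g1 g2 S :: "'k::field mpoly"
  assumes "g1 \<in> G" "g2 \<in> G" "\<forall>m\<in>Poly_Mapping.keys q1. Poly_Mapping.keys m \<subseteq> V"
    "\<forall>m\<in>Poly_Mapping.keys q2. Poly_Mapping.keys m \<subseteq> V" "S = q1 * g1 + q2 * g2"
    "Poly_Mapping.keys (q1 * g1) \<subseteq> K" "Poly_Mapping.keys (q2 * g2) \<subseteq> K"
    "\<forall>m\<in>K. supp V m \<and> lex_le lt m (lead_mon lt S)"
  shows "reduces_to_zero lt V G S"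
proof -
  have L: "lex_le lt (lead_mon lt (q * g)) (lead_mon lt S)"
    if "q * g \<noteq> 0" "Poly_Mapping.keys (q * g) \<subseteq> K" for q g :: "'k mpoly"
  proof -
    have "lead_mon lt (q * g) \<in> Poly_Mapping.keys (q * g)"
      using lead_mon_prop[of "q * g"] that assms(8) by auto
    then show ?thesis using that assms(8) by auto
  qed
  show ?thesis unfolding reduces_to_zero_def
  proof (rule exI[of _ "[g1, g2]"], rule exI[of _ "[q1, q2]"], intro conjI allI impI)
    fix i assume "i < length [g1, g2]" "[q1, q2] ! i * [g1, g2] ! i \<noteq> 0"
    then show "lex_le lt (lead_mon lt ([q1, q2] ! i * [g1, g2] ! i)) (lead_mon lt S)"
      using L assms(6,7) by (cases i) auto
  qed (use assms in auto)
qed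

lemma only_if:
  fixes S :: "'k::field mpoly"
  assumes red: "reduces_to_zero lt V G S"
    and S: "Poly_Mapping.keys S = {M, M'}" and MM: "lex_less lt M' M" and sM: "supp V M" "supp V M'"
    and G: "\<forall>g\<in>G. \<exists>e1 e2. g = Y e1 - Y e2 \<and> supp V e1 \<and> supp V e2 \<and> e1 \<noteq> e2"
  shows "\<exists>g\<in>G. \<exists>e1 e2. (g = Y e1 - Y e2 \<or> g = Y e2 - Y e1) \<and> lex_less lt e2 e1 \<and> (\<exists>t. M = t + e1)"
proof -
  obtain gs qs where gq: "length qs = length gs" "set gs \<subseteq> G"
    "\<forall>q\<in>set qs. \<forall>m\<in>Poly_Mapping.keys q. Poly_Mapping.keys m \<subseteq> V"
    "S = sum_list (map2 (*) qs gs)"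
    "\<forall>i<length gs. qs ! i * gs ! i \<noteq> 0 \<longrightarrow> lex_le lt (lead_mon lt (qs ! i * gs ! i)) (lead_mon lt S)"
    using red unfolding reduces_to_zero_def by blast
  have ne: "M \<noteq> M'" using MM lex_irr by auto
  have lS: "lead_mon lt S = M"
    using lead_two[OF sM, of S] S MM by simp
  have "Poly_Mapping.lookup S M \<noteq> 0" using S by (simp add: in_keys_iff[symmetric])
  then have "\<exists>x\<in>set (map2 (*) qs gs). Poly_Mapping.lookup x M \<noteq> 0"
    using lookup_sum_list_zero[of "map2 (*) qs gs" M] gq(4) by auto
  then obtain q g where qg: "(q, g) \<in> set (zip qs gs)" "Poly_Mapping.lookup (q * g) M \<noteq> 0" by auto
  then obtain i where i: "qs ! i = q" "gs ! i = g" "i < length qs" "i < length gs"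
    by (auto simp: in_set_zip)
  have gG: "g \<in> G" using i gq(2) nth_mem by blast
  have qV: "\<forall>t\<in>Poly_Mapping.keys q. supp V t" using gq(3) i nth_mem unfolding supp_def by blast
  have MK: "M \<in> Poly_Mapping.keys (q * g)" using qg by (simp add: in_keys_iff)
  then have "q * g \<noteq> 0" by auto
  then have le: "lex_le lt (lead_mon lt (q * g)) M" using gq(5) i lS by auto
  obtain e1 e2 where e: "g = Y e1 - Y e2" "supp V e1" "supp V e2" "e1 \<noteq> e2" using G gG by blast
  consider "lex_less lt e2 e1" | "lex_less lt e1 e2" using lex_total[OF e(2,3,4)] by blast
  then show ?thesis
  proof cases
    case 1
    have "\<exists>t. M = t + e1"
      using core_L[OF qV e(2) e(3) 1, of M] le MK e(1) sM(1) by simp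
    then show ?thesis using gG e(1) 1 by blast
  next
    case 2
    have eq: "q * g = (- q) * (Y e2 - Y e1)" unfolding e(1) by (simp add: algebra_simps)
    have qV': "\<forall>t\<in>Poly_Mapping.keys (- q). supp V t" using qV keys_uminus' by metis
    have "\<exists>t. M = t + e2"
      using core_L[OF qV' e(3) e(2) 2, of M] le MK eq sM(1) by simp
    then show ?thesis using gG e(1) 2 by blast
  qed
qed

end

lemma X2_neq: "u \<noteq> u' \<Longrightarrow> u \<noteq> v' \<Longrightarrow> X u + X v \<noteq> X u' + X v'"
proof
  assume "u \<noteq> u'" "u \<noteq> v'" "X u + X v = X u' + X v'"
  then have "Poly_Mapping.lookup (X u + X v) u = Poly_Mapping.lookup (X u' + X v') u" by simp
  then show False using \<open>u \<noteq> u'\<close> \<open>u \<noteq> v'\<close> by (simp add: lookup_add lookup_single when_def)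
qed

lemma keysX2: "u \<noteq> v \<Longrightarrow> Poly_Mapping.keys (X u + X v) = {u, v}"
  by (auto simp: in_keys_iff lookup_add lookup_single when_def split: if_splits)

lemma mem3:
  assumes "mon3 u v w = t + (X p + X q)"
  shows "p \<in> {u, v, w}" "q \<in> {u, v, w}"
proof -
  have "Poly_Mapping.lookup (mon3 u v w) p \<noteq> 0" "Poly_Mapping.lookup (mon3 u v w) q \<noteq> 0"
    unfolding assms by (simp_all add: lookup_add lookup_single when_def)
  then show "p \<in> {u, v, w}" "q \<in> {u, v, w}" by (auto simp: lookup_mon3 split: if_splits)
qed

lemma Ydiff_keys:
  fixes g :: "'k::comm_ring_1 mpoly"
  assumes "g = Y e1 - Y e2 \<or> g = Y e2 - Y e1" "e1 \<noteq> e2"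
  shows "Poly_Mapping.keys g = {e1, e2}"
  using assms keysY2[of e1 e2] keysY2[of e2 e1] by auto

lemma two_set_eq: "e1 \<noteq> e2 \<Longrightarrow> {e1, e2} = {E1, E2} \<Longrightarrow> (e1 = E1 \<and> e2 = E2) \<or> (e1 = E2 \<and> e2 = E1)"
  by (metis doubleton_eq_iff)

lemma minors_form:
  "\<forall>g\<in>(inner_minors P :: 'k::comm_ring_1 mpoly set). \<exists>e1 e2. g = Y e1 - Y e2 \<and> supp (vertex_set P) e1 \<and> supp (vertex_set P) e2 \<and> e1 \<noteq> e2"
proof
  fix g :: "'k mpoly" assume "g \<in> inner_minors P"
  then obtain x1 y1 x2 y2 where g: "g = minor (x1, y1) (x2, y2)" "inner_interval P (x1, y1) (x2, y2)"
    unfolding inner_minors_def by auto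
  have lt: "x1 < x2" "y1 < y2" using g(2) unfolding inner_interval_def by auto
  note c = inner_corners[OF g(2)]
  show "\<exists>e1 e2. g = Y e1 - Y e2 \<and> supp (vertex_set P) e1 \<and> supp (vertex_set P) e2 \<and> e1 \<noteq> e2"
  proof (rule exI[of _ "X (x1, y1) + X (x2, y2)"], rule exI[of _ "X (x1, y2) + X (x2, y1)"], intro conjI)
    show "g = Y (X (x1, y1) + X (x2, y2)) - Y (X (x1, y2) + X (x2, y1))" by (simp add: g minor_Y)
    have "Poly_Mapping.keys (X (x1, y1) + X (x2, y2)) = {(x1, y1), (x2, y2)}" using lt by (intro keysX2) auto
    then show "supp (vertex_set P) (X (x1, y1) + X (x2, y2))" using c unfolding supp_def by simp
    have "Poly_Mapping.keys (X (x1, y2) + X (x2, y1)) = {(x1, y2), (x2, y1)}" using lt by (intro keysX2) auto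
    then show "supp (vertex_set P) (X (x1, y2) + X (x2, y1))" using c unfolding supp_def by simp
    show "X (x1, y1) + X (x2, y2) \<noteq> X (x1, y2) + X (x2, y1)" using lt by (intro X2_neq) auto
  qed
qed

theorem mainTheorem2:
  fixes P :: "vertex set" and lt :: "vertex \<Rightarrow> vertex \<Rightarrow> bool"
    and i j k l m n :: int
  assumes cells: "is_collection_of_cells P"
    and ineq: "i < m" "m < k" "n < j" "j < l"
    and inner1: "inner_interval P (i, j) (k, l)"
    and inner2: "inner_interval P (m, n) (k, l)"
    and porder: "P_order P lt"
    and notcoprime: "Poly_Mapping.keys (lead_mon lt (minor (i, j) (k, l) :: 'k::field mpoly))
                     \<inter> Poly_Mapping.keys (lead_mon lt (minor (m, n) (k, l) :: 'k mpoly)) \<noteq> {}"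
  shows "reduces_to_zero lt (vertex_set P) (inner_minors P)
           (spoly lt (minor (i, j) (k, l) :: 'k mpoly) (minor (m, n) (k, l)))
         \<longleftrightarrow>
         (let a = (i, j); b = (k, l); \<alpha> = (m, n); c = (i, l); d = (k, j);
              \<gamma> = (m, l); \<delta> = (k, n); h = (m, j); r = (i, n) in
          (lex_less lt (mon3 a \<gamma> \<delta>) (mon3 \<alpha> c d) \<and>
             ((lt h \<alpha> \<and> lt \<delta> \<alpha>) \<or> (lt h d \<and> lt \<delta> d))) \<or>
          (lex_less lt (mon3 a \<gamma> \<delta>) (mon3 \<alpha> c d) \<and> inner_interval P r h \<and>
             ((lt r \<alpha> \<and> lt \<gamma> \<alpha>) \<or> (lt r c \<and> lt \<gamma> c))) \<or>
          (lex_less lt (mon3 \<alpha> c d) (mon3 a \<gamma> \<delta>) \<and>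
             ((lt h a \<and> lt c a) \<or> (lt h \<gamma> \<and> lt c \<gamma>))) \<or>
          (lex_less lt (mon3 \<alpha> c d) (mon3 a \<gamma> \<delta>) \<and> inner_interval P r h \<and>
             ((lt r a \<and> lt d a) \<or> (lt r \<delta> \<and> lt d \<delta>))))"
proof -
  let ?V = "vertex_set P"
  interpret pord ?V lt
    using porder unfolding P_order_def by unfold_locales blast+
  note c1 = inner_corners[OF inner1]
  note c2 = inner_corners[OF inner2]
  have inAG: "inner_interval P (i, j) (m, l)" using inner_sub[OF inner1] ineq by auto
  have inAD: "inner_interval P (m, n) (k, j)" using inner_sub[OF inner2] ineq by auto
  note c3 = inner_corners[OF inAG]
  have Va: "(i, j) \<in> ?V" and Vb: "(k, l) \<in> ?V" and Vc: "(i, l) \<in> ?V" and Vd: "(k, j) \<in> ?V"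
    and Val: "(m, n) \<in> ?V" and Vg: "(m, l) \<in> ?V" and Vde: "(k, n) \<in> ?V" and Vh: "(m, j) \<in> ?V"
    using c1 c2 c3 by auto
  have kf1: "Poly_Mapping.keys (minor (i, j) (k, l) :: 'k mpoly) = {X (i, j) + X (k, l), X (i, l) + X (k, j)}"
    unfolding minor_Y fst_conv snd_conv using ineq by (intro keysY2 X2_neq) auto
  have kf2: "Poly_Mapping.keys (minor (m, n) (k, l) :: 'k mpoly) = {X (m, n) + X (k, l), X (m, l) + X (k, n)}"
    unfolding minor_Y fst_conv snd_conv using ineq by (intro keysY2 X2_neq) auto
  have s_ab: "supp ?V (X (i, j) + X (k, l))" and s_cd: "supp ?V (X (i, l) + X (k, j))"
    and s_alb: "supp ?V (X (m, n) + X (k, l))" and s_gd: "supp ?V (X (m, l) + X (k, n))"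
    by (intro supp_add supp_X Va Vb Vc Vd Val Vg Vde)+
  have ab_cd: "X (i, j) + X (k, l) \<noteq> X (i, l) + X (k, j)" using ineq by (intro X2_neq) auto
  have alb_gd: "X (m, n) + X (k, l) \<noteq> X (m, l) + X (k, n)" using ineq by (intro X2_neq) auto
  have l1: "lead_mon lt (minor (i, j) (k, l) :: 'k mpoly) \<in> {X (i, j) + X (k, l), X (i, l) + X (k, j)}"
    using lead_mon_prop[of "minor (i, j) (k, l) :: 'k mpoly"] kf1 s_ab s_cd by auto
  have l2: "lead_mon lt (minor (m, n) (k, l) :: 'k mpoly) \<in> {X (m, n) + X (k, l), X (m, l) + X (k, n)}"
    using lead_mon_prop[of "minor (m, n) (k, l) :: 'k mpoly"] kf2 s_alb s_gd by auto
  have k_ab: "Poly_Mapping.keys (X (i, j) + X (k, l)) = {(i, j), (k, l)}" using ineq by (intro keysX2) auto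
  have k_cd: "Poly_Mapping.keys (X (i, l) + X (k, j)) = {(i, l), (k, j)}" using ineq by (intro keysX2) auto
  have k_alb: "Poly_Mapping.keys (X (m, n) + X (k, l)) = {(m, n), (k, l)}" using ineq by (intro keysX2) auto
  have k_gd: "Poly_Mapping.keys (X (m, l) + X (k, n)) = {(m, l), (k, n)}" using ineq by (intro keysX2) auto
  have lead1: "lead_mon lt (minor (i, j) (k, l) :: 'k mpoly) = X (i, j) + X (k, l)"
   and lead2: "lead_mon lt (minor (m, n) (k, l) :: 'k mpoly) = X (m, n) + X (k, l)"
    using l1 l2 notcoprime k_ab k_cd k_alb k_gd ineq by auto
  have L1: "lex_less lt (X (i, l) + X (k, j)) (X (i, j) + X (k, l))"
  proof (rule ccontr)
    assume "\<not> ?thesis"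
    then have "lex_less lt (X (i, j) + X (k, l)) (X (i, l) + X (k, j))" using lex_total[OF s_ab s_cd ab_cd] by auto
    then have "lead_mon lt (minor (i, j) (k, l) :: 'k mpoly) = X (i, l) + X (k, j)"
      using lead_two[OF s_cd s_ab kf1[unfolded insert_commute[of "X (i, j) + X (k, l)"]]] by simp
    then show False using lead1 ab_cd by simp
  qed
  have L2: "lex_less lt (X (m, l) + X (k, n)) (X (m, n) + X (k, l))"
  proof (rule ccontr)
    assume "\<not> ?thesis"
    then have "lex_less lt (X (m, n) + X (k, l)) (X (m, l) + X (k, n))" using lex_total[OF s_alb s_gd alb_gd] by auto
    then have "lead_mon lt (minor (m, n) (k, l) :: 'k mpoly) = X (m, l) + X (k, n)"
      using lead_two[OF s_gd s_alb kf2[unfolded insert_commute[of "X (m, n) + X (k, l)"]]] by simp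
    then show False using lead2 alb_gd by simp
  qed
  define A where "A = mon3 (i, j) (m, l) (k, n)"
  define B where "B = mon3 (m, n) (i, l) (k, j)"
  have lc1: "lead_coef lt (minor (i, j) (k, l) :: 'k mpoly) = 1"
    unfolding lead_coef_def lead1 unfolding minor_Y fst_conv snd_conv lookup_minus using ab_cd
    by (simp add: lookup_single)
  have lc2: "lead_coef lt (minor (m, n) (k, l) :: 'k mpoly) = 1"
    unfolding lead_coef_def lead2 unfolding minor_Y fst_conv snd_conv lookup_minus using alb_gd
    by (simp add: lookup_single)
  have d1: "(X (m, n) + X (k, l)) - (X (i, j) + X (k, l)) = X (m, n)"
    by (rule poly_mapping_eqI) (use ineq in \<open>auto simp: lookup_minus lookup_add lookup_single when_def\<close>)
  have w1: "mon_lcm (X (i, j) + X (k, l)) (X (m, n) + X (k, l)) - (X (i, j) + X (k, l)) = X (m, n)"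
    unfolding mon_lcm_def d1 by (rule add_diff_cancel_left')
  have w2: "mon_lcm (X (i, j) + X (k, l)) (X (m, n) + X (k, l)) - (X (m, n) + X (k, l)) = X (i, j)"
  proof -
    have "mon_lcm (X (i, j) + X (k, l)) (X (m, n) + X (k, l)) = X (i, j) + (X (m, n) + X (k, l))"
      unfolding mon_lcm_def d1 by (simp only: ac_simps)
    then show ?thesis by simp
  qed
  have e1: "X (m, n) + (X (i, j) + X (k, l)) = X (i, j) + (X (m, n) + X (k, l))" by (simp only: ac_simps)
  have e2: "X (m, n) + (X (i, l) + X (k, j)) = B" unfolding B_def mon3_alt ..
  have e3: "X (i, j) + (X (m, l) + X (k, n)) = A" unfolding A_def mon3_alt ..
  have SP: "spoly lt (minor (i, j) (k, l) :: 'k mpoly) (minor (m, n) (k, l)) = Y A - Y B"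
    unfolding spoly_def Let_def lead1 lead2 lc1 lc2 w1 w2 inverse_1
    unfolding minor_Y fst_conv snd_conv right_diff_distrib mult_single e1 e2 e3
    by simp
  have sA: "supp ?V A" unfolding A_def by (intro supp_mon3 Va Vg Vde)
  have sB: "supp ?V B" unfolding B_def by (intro supp_mon3 Val Vc Vd)
  have AB: "A \<noteq> B" unfolding A_def B_def using ineq by (intro mon3_neq) auto
  define D where "D = mon3 (k, n) (m, j) (i, l)"
  define D' where "D' = mon3 (k, j) (i, n) (m, l)"
  have sD: "supp ?V D" unfolding D_def by (intro supp_mon3 Vde Vh Vc)
  have q1g1: "(var (k, n) :: 'k mpoly) * minor (i, j) (m, l) = Y A - Y D"
  proof -
    have "X (k, n) + (X (i, j) + X (m, l)) = A" "X (k, n) + (X (i, l) + X (m, j)) = D"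
      unfolding A_def D_def mon3_alt by (simp_all only: ac_simps)
    then show ?thesis unfolding minor_Y fst_conv snd_conv var_mult_Y by simp
  qed
  have q2g2: "(- var (i, l) :: 'k mpoly) * minor (m, n) (k, j) = Y D - Y B"
  proof -
    have "X (i, l) + (X (m, n) + X (k, j)) = B" "X (i, l) + (X (m, j) + X (k, n)) = D"
      unfolding B_def D_def mon3_alt by (simp_all only: ac_simps)
    then show ?thesis unfolding minor_Y fst_conv snd_conv nvar_mult_Y by simp
  qed
  have q3g3: "(var (k, j) :: 'k mpoly) * minor (i, n) (m, l) = Y D' - Y B"
  proof -
    have "X (k, j) + (X (i, n) + X (m, l)) = D'" "X (k, j) + (X (i, l) + X (m, n)) = B"
      unfolding B_def D'_def mon3_alt by (simp_all only: ac_simps)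
    then show ?thesis unfolding minor_Y fst_conv snd_conv var_mult_Y by simp
  qed
  have q4g4: "(- var (m, l) :: 'k mpoly) * minor (i, n) (k, j) = Y A - Y D'"
  proof -
    have "X (m, l) + (X (i, n) + X (k, j)) = D'" "X (m, l) + (X (i, j) + X (k, n)) = A"
      unfolding A_def D'_def mon3_alt by (simp_all only: ac_simps)
    then show ?thesis unfolding minor_Y fst_conv snd_conv nvar_mult_Y by simp
  qed
  have EX13: "(Y A - Y B :: 'k mpoly) = var (k, n) * minor (i, j) (m, l) + (- var (i, l)) * minor (m, n) (k, j)"
    unfolding q1g1 q2g2 by simp
  have EX24: "(Y A - Y B :: 'k mpoly) = var (k, j) * minor (i, n) (m, l) + (- var (m, l)) * minor (i, n) (k, j)"
    unfolding q3g3 q4g4 by simp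
  have DA: "lex_less lt D A \<longleftrightarrow> (lt (m, j) (i, j) \<and> lt (i, l) (i, j)) \<or> (lt (m, j) (m, l) \<and> lt (i, l) (m, l))"
  proof -
    have "D = mon3 (k, n) (m, j) (i, l)" "A = mon3 (k, n) (i, j) (m, l)"
      unfolding D_def A_def by (simp_all only: mon3_def ac_simps)
    then show ?thesis using lex3[OF Vde Va Vg Vh Vc] ineq by auto
  qed
  have DB: "lex_less lt D B \<longleftrightarrow> (lt (m, j) (m, n) \<and> lt (k, n) (m, n)) \<or> (lt (m, j) (k, j) \<and> lt (k, n) (k, j))"
  proof -
    have "D = mon3 (i, l) (m, j) (k, n)" "B = mon3 (i, l) (m, n) (k, j)"
      unfolding D_def B_def by (simp_all only: mon3_def ac_simps)
    then show ?thesis using lex3[OF Vc Val Vd Vh Vde] ineq by auto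
  qed
  have D'A: "lex_less lt D' A \<longleftrightarrow> (lt (i, n) (i, j) \<and> lt (k, j) (i, j)) \<or> (lt (i, n) (k, n) \<and> lt (k, j) (k, n))"
    if Vr: "(i, n) \<in> ?V"
  proof -
    have "D' = mon3 (m, l) (i, n) (k, j)" "A = mon3 (m, l) (i, j) (k, n)"
      unfolding D'_def A_def by (simp_all only: mon3_def ac_simps)
    then show ?thesis using lex3[OF Vg Va Vde Vr Vd] ineq by auto
  qed
  have D'B: "lex_less lt D' B \<longleftrightarrow> (lt (i, n) (m, n) \<and> lt (m, l) (m, n)) \<or> (lt (i, n) (i, l) \<and> lt (m, l) (i, l))"
    if Vr: "(i, n) \<in> ?V"
  proof -
    have "D' = mon3 (k, j) (i, n) (m, l)" "B = mon3 (k, j) (m, n) (i, l)"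
      unfolding D'_def B_def by (simp_all only: mon3_def ac_simps)
    then show ?thesis using lex3[OF Vd Val Vc Vr Vg] ineq by auto
  qed
  have kv: "\<forall>mm\<in>Poly_Mapping.keys (var u :: 'k mpoly). Poly_Mapping.keys mm \<subseteq> ?V" if "u \<in> ?V" for u
    using that unfolding keys_var by simp
  have knv: "\<forall>mm\<in>Poly_Mapping.keys (- var u :: 'k mpoly). Poly_Mapping.keys mm \<subseteq> ?V" if "u \<in> ?V" for u
    using that unfolding keys_nvar by simp
  have R_facts: "inner_interval P (i, n) (m, l) \<and> inner_interval P (i, n) (k, j) \<and> (i, n) \<in> ?V"
    if R: "inner_interval P (i, n) (m, j)"
  proof -
    have "inner_interval P (i, n) (m, l)" using inner_union_y[OF R inAG] .
    moreover have "inner_interval P (i, n) (k, j)" using inner_union_x[OF R inAD] .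
    moreover have "(i, n) \<in> ?V" using inner_corners(1)[OF R] .
    ultimately show ?thesis by blast
  qed
  have kS: "Poly_Mapping.keys (Y A - Y B :: 'k mpoly) = {A, B}" using keysY2[OF AB] .
  have SA: "lead_mon lt (Y A - Y B :: 'k mpoly) = A" if "lex_less lt B A"
    using lead_two[OF sA sB kS that] .
  have SB: "lead_mon lt (Y A - Y B :: 'k mpoly) = B" if "lex_less lt A B"
    using lead_two[OF sB sA kS[unfolded insert_commute[of A]] that] .
  have inAGm: "minor (i, j) (m, l) \<in> (inner_minors P :: 'k mpoly set)" using inAG unfolding inner_minors_def by blast
  have inADm: "minor (m, n) (k, j) \<in> (inner_minors P :: 'k mpoly set)" using inAD unfolding inner_minors_def by blast
  have IF13: "reduces_to_zero lt ?V (inner_minors P) (Y A - Y B :: 'k mpoly)"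
    if H: "(lex_less lt B A \<and> lex_less lt D A) \<or> (lex_less lt A B \<and> lex_less lt D B)"
  proof (rule if_dir[OF inAGm inADm kv[OF Vde] knv[OF Vc] EX13, where K = "{A, B, D}"])
    show "Poly_Mapping.keys (var (k, n) * minor (i, j) (m, l) :: 'k mpoly) \<subseteq> {A, B, D}"
      unfolding q1g1 using keysY2_sub by blast
    show "Poly_Mapping.keys (- var (i, l) * minor (m, n) (k, j) :: 'k mpoly) \<subseteq> {A, B, D}"
      unfolding q2g2 using keysY2_sub by blast
    show "\<forall>mm\<in>{A, B, D}. supp ?V mm \<and> lex_le lt mm (lead_mon lt (Y A - Y B :: 'k mpoly))"
      using H SA SB sA sB sD unfolding lex_le_def by auto
  qed
  have IF24: "reduces_to_zero lt ?V (inner_minors P) (Y A - Y B :: 'k mpoly)"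
    if R: "inner_interval P (i, n) (m, j)" and H: "(lex_less lt B A \<and> lex_less lt D' A) \<or> (lex_less lt A B \<and> lex_less lt D' B)"
  proof -
    note RF = R_facts[OF R]
    have m3: "minor (i, n) (m, l) \<in> (inner_minors P :: 'k mpoly set)" using RF unfolding inner_minors_def by blast
    have m4: "minor (i, n) (k, j) \<in> (inner_minors P :: 'k mpoly set)" using RF unfolding inner_minors_def by blast
    have sD': "supp ?V D'" unfolding D'_def using RF by (intro supp_mon3 Vd Vg) auto
    show ?thesis
    proof (rule if_dir[OF m3 m4 kv[OF Vd] knv[OF Vg] EX24, where K = "{A, B, D'}"])
      show "Poly_Mapping.keys (var (k, j) * minor (i, n) (m, l) :: 'k mpoly) \<subseteq> {A, B, D'}"
        unfolding q3g3 using keysY2_sub by blast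
      show "Poly_Mapping.keys (- var (m, l) * minor (i, n) (k, j) :: 'k mpoly) \<subseteq> {A, B, D'}"
        unfolding q4g4 using keysY2_sub by blast
      show "\<forall>mm\<in>{A, B, D'}. supp ?V mm \<and> lex_le lt mm (lead_mon lt (Y A - Y B :: 'k mpoly))"
        using H SA SB sA sB sD' unfolding lex_le_def by auto
    qed
  qed
  have ONLY_BA: "((lt (m, j) (i, j) \<and> lt (i, l) (i, j)) \<or> (lt (m, j) (m, l) \<and> lt (i, l) (m, l))) \<or>
      (inner_interval P (i, n) (m, j) \<and> ((lt (i, n) (i, j) \<and> lt (k, j) (i, j)) \<or> (lt (i, n) (k, n) \<and> lt (k, j) (k, n))))"
    if red: "reduces_to_zero lt ?V (inner_minors P) (Y A - Y B :: 'k mpoly)" and BA: "lex_less lt B A"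
  proof -
    obtain g e1 e2 where g: "g \<in> (inner_minors P :: 'k mpoly set)" "g = Y e1 - Y e2 \<or> g = Y e2 - Y e1"
        "lex_less lt e2 e1" "\<exists>t. A = t + e1"
      using only_if[OF red kS BA sA sB minors_form] by blast
    obtain x1 y1 x2 y2 where gm: "g = minor (x1, y1) (x2, y2)" "inner_interval P (x1, y1) (x2, y2)"
      using g(1) unfolding inner_minors_def by auto
    have xy: "x1 < x2" "y1 < y2" using gm(2) unfolding inner_interval_def by auto
    have kg: "Poly_Mapping.keys g = {X (x1, y1) + X (x2, y2), X (x1, y2) + X (x2, y1)}"
      unfolding gm(1) minor_Y fst_conv snd_conv using xy by (intro keysY2 X2_neq) auto
    have ne: "e1 \<noteq> e2" using g(3) lex_irr by auto
    then have "Poly_Mapping.keys g = {e1, e2}" using Ydiff_keys g(2) by blast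
    then have ee: "(e1 = X (x1, y1) + X (x2, y2) \<and> e2 = X (x1, y2) + X (x2, y1)) \<or>
        (e1 = X (x1, y2) + X (x2, y1) \<and> e2 = X (x1, y1) + X (x2, y2))"
      using two_set_eq[OF ne] kg by simp
    obtain t where t: "mon3 (i, j) (m, l) (k, n) = t + e1" using g(4) A_def by auto
    from ee show ?thesis
    proof
      assume e: "e1 = X (x1, y1) + X (x2, y2) \<and> e2 = X (x1, y2) + X (x2, y1)"
      have "(x1, y1) \<in> {(i, j), (m, l), (k, n)}" "(x2, y2) \<in> {(i, j), (m, l), (k, n)}"
        using mem3[OF t[unfolded e[THEN conjunct1]]] by auto
      then have xe: "x1 = i \<and> y1 = j \<and> x2 = m \<and> y2 = l" using xy ineq by auto
      have "lex_less lt (X (i, l) + X (m, j)) (X (i, j) + X (m, l))" using g(3) e xe by simp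
      moreover have "X (i, l) + X (m, j) = X (m, j) + X (i, l)" by (rule add.commute)
      ultimately have "lex_less lt (X (m, j) + X (i, l)) (X (i, j) + X (m, l))" by simp
      then show ?thesis using lex2[OF Va Vg Vh Vc] ineq by auto
    next
      assume e: "e1 = X (x1, y2) + X (x2, y1) \<and> e2 = X (x1, y1) + X (x2, y2)"
      have "(x1, y2) \<in> {(i, j), (m, l), (k, n)}" "(x2, y1) \<in> {(i, j), (m, l), (k, n)}"
        using mem3[OF t[unfolded e[THEN conjunct1]]] by auto
      then have "(x1 = i \<and> y1 = n \<and> x2 = k \<and> y2 = j) \<or> (x1 = m \<and> y1 = n \<and> x2 = k \<and> y2 = l)"
        using xy ineq by auto
      then show ?thesis
      proof
        assume xe: "x1 = i \<and> y1 = n \<and> x2 = k \<and> y2 = j"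
        have R: "inner_interval P (i, n) (m, j)" using inner_sub[OF gm(2)] xe ineq by auto
        have Vr: "(i, n) \<in> ?V" using inner_corners(1)[OF R] .
        have "lex_less lt (X (i, n) + X (k, j)) (X (i, j) + X (k, n))" using g(3) e xe by simp
        then show ?thesis using lex2[OF Va Vde Vr Vd] ineq R by auto
      next
        assume xe: "x1 = m \<and> y1 = n \<and> x2 = k \<and> y2 = l"
        have "lex_less lt (X (m, n) + X (k, l)) (X (m, l) + X (k, n))" using g(3) e xe by simp
        then show ?thesis using lex_asym[OF s_gd s_alb] L2 by blast
      qed
    qed
  qed
  have ONLY_AB: "((lt (m, j) (m, n) \<and> lt (k, n) (m, n)) \<or> (lt (m, j) (k, j) \<and> lt (k, n) (k, j))) \<or>
      (inner_interval P (i, n) (m, j) \<and> ((lt (i, n) (m, n) \<and> lt (m, l) (m, n)) \<or> (lt (i, n) (i, l) \<and> lt (m, l) (i, l))))"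
    if red: "reduces_to_zero lt ?V (inner_minors P) (Y A - Y B :: 'k mpoly)" and AB': "lex_less lt A B"
  proof -
    obtain g e1 e2 where g: "g \<in> (inner_minors P :: 'k mpoly set)" "g = Y e1 - Y e2 \<or> g = Y e2 - Y e1"
        "lex_less lt e2 e1" "\<exists>t. B = t + e1"
      using only_if[OF red kS[unfolded insert_commute[of A]] AB' sB sA minors_form] by blast
    obtain x1 y1 x2 y2 where gm: "g = minor (x1, y1) (x2, y2)" "inner_interval P (x1, y1) (x2, y2)"
      using g(1) unfolding inner_minors_def by auto
    have xy: "x1 < x2" "y1 < y2" using gm(2) unfolding inner_interval_def by auto
    have kg: "Poly_Mapping.keys g = {X (x1, y1) + X (x2, y2), X (x1, y2) + X (x2, y1)}"
      unfolding gm(1) minor_Y fst_conv snd_conv using xy by (intro keysY2 X2_neq) auto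
    have ne: "e1 \<noteq> e2" using g(3) lex_irr by auto
    then have "Poly_Mapping.keys g = {e1, e2}" using Ydiff_keys g(2) by blast
    then have ee: "(e1 = X (x1, y1) + X (x2, y2) \<and> e2 = X (x1, y2) + X (x2, y1)) \<or>
        (e1 = X (x1, y2) + X (x2, y1) \<and> e2 = X (x1, y1) + X (x2, y2))"
      using two_set_eq[OF ne] kg by simp
    obtain t where t: "mon3 (m, n) (i, l) (k, j) = t + e1" using g(4) B_def by auto
    from ee show ?thesis
    proof
      assume e: "e1 = X (x1, y1) + X (x2, y2) \<and> e2 = X (x1, y2) + X (x2, y1)"
      have "(x1, y1) \<in> {(m, n), (i, l), (k, j)}" "(x2, y2) \<in> {(m, n), (i, l), (k, j)}"
        using mem3[OF t[unfolded e[THEN conjunct1]]] by auto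
      then have xe: "x1 = m \<and> y1 = n \<and> x2 = k \<and> y2 = j" using xy ineq by auto
      have "lex_less lt (X (m, j) + X (k, n)) (X (m, n) + X (k, j))" using g(3) e xe by simp
      then show ?thesis using lex2[OF Val Vd Vh Vde] ineq by auto
    next
      assume e: "e1 = X (x1, y2) + X (x2, y1) \<and> e2 = X (x1, y1) + X (x2, y2)"
      have "(x1, y2) \<in> {(m, n), (i, l), (k, j)}" "(x2, y1) \<in> {(m, n), (i, l), (k, j)}"
        using mem3[OF t[unfolded e[THEN conjunct1]]] by auto
      then have "(x1 = i \<and> y1 = n \<and> x2 = m \<and> y2 = l) \<or> (x1 = i \<and> y1 = j \<and> x2 = k \<and> y2 = l)"
        using xy ineq by auto
      then show ?thesis
      proof
        assume xe: "x1 = i \<and> y1 = n \<and> x2 = m \<and> y2 = l"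
        have R: "inner_interval P (i, n) (m, j)" using inner_sub[OF gm(2)] xe ineq by auto
        have Vr: "(i, n) \<in> ?V" using inner_corners(1)[OF R] .
        have "lex_less lt (X (i, n) + X (m, l)) (X (i, l) + X (m, n))" using g(3) e xe by simp
        moreover have "X (i, l) + X (m, n) = X (m, n) + X (i, l)" by (rule add.commute)
        ultimately have "lex_less lt (X (i, n) + X (m, l)) (X (m, n) + X (i, l))" by simp
        then show ?thesis using lex2[OF Val Vc Vr Vg] ineq R by auto
      next
        assume xe: "x1 = i \<and> y1 = j \<and> x2 = k \<and> y2 = l"
        have "lex_less lt (X (i, j) + X (k, l)) (X (i, l) + X (k, j))" using g(3) e xe by simp
        then show ?thesis using lex_asym[OF s_cd s_ab] L1 by blast
      qed
    qed
  qed
  show ?thesis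
    unfolding Let_def A_def[symmetric] B_def[symmetric] SP
  proof
    assume red: "reduces_to_zero lt ?V (inner_minors P) (Y A - Y B :: 'k mpoly)"
    consider "lex_less lt B A" | "lex_less lt A B" using lex_total[OF sA sB AB] by blast
    then show "(lex_less lt A B \<and> (lt (m, j) (m, n) \<and> lt (k, n) (m, n) \<or> lt (m, j) (k, j) \<and> lt (k, n) (k, j))) \<or>
    (lex_less lt A B \<and> inner_interval P (i, n) (m, j) \<and> (lt (i, n) (m, n) \<and> lt (m, l) (m, n) \<or> lt (i, n) (i, l) \<and> lt (m, l) (i, l))) \<or>
    (lex_less lt B A \<and> (lt (m, j) (i, j) \<and> lt (i, l) (i, j) \<or> lt (m, j) (m, l) \<and> lt (i, l) (m, l))) \<or>
    (lex_less lt B A \<and> inner_interval P (i, n) (m, j) \<and> (lt (i, n) (i, j) \<and> lt (k, j) (i, j) \<or> lt (i, n) (k, n) \<and> lt (k, j) (k, n)))"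
    proof cases
      case 1 then show ?thesis using ONLY_BA[OF red] by blast
    next
      case 2 then show ?thesis using ONLY_AB[OF red] by blast
    qed
  next
    assume H: "(lex_less lt A B \<and> (lt (m, j) (m, n) \<and> lt (k, n) (m, n) \<or> lt (m, j) (k, j) \<and> lt (k, n) (k, j))) \<or>
    (lex_less lt A B \<and> inner_interval P (i, n) (m, j) \<and> (lt (i, n) (m, n) \<and> lt (m, l) (m, n) \<or> lt (i, n) (i, l) \<and> lt (m, l) (i, l))) \<or>
    (lex_less lt B A \<and> (lt (m, j) (i, j) \<and> lt (i, l) (i, j) \<or> lt (m, j) (m, l) \<and> lt (i, l) (m, l))) \<or>
    (lex_less lt B A \<and> inner_interval P (i, n) (m, j) \<and> (lt (i, n) (i, j) \<and> lt (k, j) (i, j) \<or> lt (i, n) (k, n) \<and> lt (k, j) (k, n)))"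
    then consider
        (c1) "lex_less lt A B" "(lt (m, j) (m, n) \<and> lt (k, n) (m, n) \<or> lt (m, j) (k, j) \<and> lt (k, n) (k, j))"
      | (c2) "lex_less lt A B" "inner_interval P (i, n) (m, j)" "(lt (i, n) (m, n) \<and> lt (m, l) (m, n) \<or> lt (i, n) (i, l) \<and> lt (m, l) (i, l))"
      | (c3) "lex_less lt B A" "(lt (m, j) (i, j) \<and> lt (i, l) (i, j) \<or> lt (m, j) (m, l) \<and> lt (i, l) (m, l))"
      | (c4) "lex_less lt B A" "inner_interval P (i, n) (m, j)" "(lt (i, n) (i, j) \<and> lt (k, j) (i, j) \<or> lt (i, n) (k, n) \<and> lt (k, j) (k, n))"
      by blast
    then show "reduces_to_zero lt ?V (inner_minors P) (Y A - Y B :: 'k mpoly)"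
    proof cases
      case c1 then show ?thesis using IF13 DB by blast
    next
      case c2
      have Vr: "(i, n) \<in> ?V" using R_facts[OF c2(2)] by blast
      show ?thesis using IF24[OF c2(2)] D'B[OF Vr] c2 by blast
    next
      case c3 then show ?thesis using IF13 DA by blast
    next
      case c4
      have Vr: "(i, n) \<in> ?V" using R_facts[OF c4(2)] by blast
      show ?thesis using IF24[OF c4(2)] D'A[OF Vr] c4 by blast
    qed
  qed
qed

end
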